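(* Let $(X,T)$ be a dynamical system and let $K\subset\mathrm{Per}(T)$ be linkable. Then $\overline{\mathcal M_T^{co}(K)}$ equals the closed convex hull of $\mathcal M_T^{co}(K)$ in $\mathcal M(X)$ (closures in the weak$*$ topology).
   Context: A dynamical system $(X,T)$ consists of a complete separable metric space $(X,\rho)$ and a continuous surjection $T\colon X\to X$; $\mathcal M(X)$ is the space of Borel probability measures with the weak$*$ topology. For $x\in\mathrm{Per}(T)$ of minimal period $k$, $\gamma(x)=\frac1k\sum_{j=0}^{k-1}\delta_{T^jx}$; $\mathcal M_T^{co}(K)=\{\gamma(x):x\in K\}$. $B(x,n,\varepsilon)=\{y:\rho(T^jy,T^jx)<\varepsilon,\ 0\le j<n\}$. $K\subset\mathrm{Per}(T)$ is linkable if for all $y_1,y_2\in K$, $\varepsilon>0$, $\lambda\in[0,1]$ there exist $p_1,p_2,q_1,q_2\in\mathbb N$ and $z\in K$ with: $T^{q_2}z=z$; $\lambda-\varepsilon\le\frac{p_1}{p_1+p_2}\le\lambda+\varepsilon$; $p_1\le q_1\le(1+\varepsilon)p_1$ and $z\in B(y_1,p_1,\varepsilon)$; $p_2\le q_2-q_1\le(1+\varepsilon)p_2$ and $T^{q_1}z\in B(y_2,p_2,\varepsilon)$. *)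

theory Defs
  imports "HOL-Probability.Probability"
begin

text \<open>The space X is a type of class polish_space (complete separable metric space);
  the whole type is the space.\<close>

definition dyn_system :: "('a::polish_space \<Rightarrow> 'a) \<Rightarrow> bool" where
  "dyn_system T \<longleftrightarrow> continuous_on UNIV T \<and> surj T"

definition Per :: "('a \<Rightarrow> 'a) \<Rightarrow> 'a set" where
  "Per T = {x. \<exists>n>0. (T ^^ n) x = x}"

definition min_period :: "('a \<Rightarrow> 'a) \<Rightarrow> 'a \<Rightarrow> nat" where
  "min_period T x = (LEAST n. n > 0 \<and> (T ^^ n) x = x)"

definition prob_measures :: "'a::topological_space measure set" where
  "prob_measures = {\<mu>. prob_space \<mu> \<and> sets \<mu> = sets borel}"

definition weak_star :: "'a::metric_space measure topology" where
  "weak_star = topology_generated_by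
     {{\<mu> \<in> prob_measures. (\<integral>x. f x \<partial>\<mu>) \<in> U} | f U.
        continuous_on UNIV f \<and> bounded (range f) \<and> open (U :: real set)}"

definition mcomb :: "'i set \<Rightarrow> ('i \<Rightarrow> real) \<Rightarrow> ('i \<Rightarrow> 'a::topological_space measure) \<Rightarrow> 'a measure" where
  "mcomb I c m = measure_of UNIV (sets borel) (\<lambda>A. \<Sum>i\<in>I. ennreal (c i) * emeasure (m i) A)"

definition mix :: "real \<Rightarrow> 'a::topological_space measure \<Rightarrow> 'a measure \<Rightarrow> 'a measure" where
  "mix t \<mu> \<nu> = measure_of UNIV (sets borel)
      (\<lambda>A. ennreal t * emeasure \<mu> A + ennreal (1 - t) * emeasure \<nu> A)"

definition gamma :: "('a::topological_space \<Rightarrow> 'a) \<Rightarrow> 'a \<Rightarrow> 'a measure" where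
  "gamma T x = (let k = min_period T x in
      mcomb {..<k} (\<lambda>_. 1 / real k) (\<lambda>j. return borel ((T ^^ j) x)))"

definition Mco :: "('a::topological_space \<Rightarrow> 'a) \<Rightarrow> 'a set \<Rightarrow> 'a measure set" where
  "Mco T K = gamma T ` K"

definition convex_measures :: "'a::topological_space measure set \<Rightarrow> bool" where
  "convex_measures S \<longleftrightarrow> (\<forall>\<mu>\<in>S. \<forall>\<nu>\<in>S. \<forall>t\<in>{0..1}. mix t \<mu> \<nu> \<in> S)"

definition closed_convex_hull :: "'a::metric_space measure set \<Rightarrow> 'a measure set" where
  "closed_convex_hull S = \<Inter>{C. C \<subseteq> prob_measures \<and> S \<subseteq> C \<and> closedin weak_star C \<and> convex_measures C}"

definition bowen_ball :: "('a::metric_space \<Rightarrow> 'a) \<Rightarrow> 'a \<Rightarrow> nat \<Rightarrow> real \<Rightarrow> 'a set" where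
  "bowen_ball T x n \<epsilon> = {y. \<forall>j<n. dist ((T ^^ j) y) ((T ^^ j) x) < \<epsilon>}"

definition linkable :: "('a::metric_space \<Rightarrow> 'a) \<Rightarrow> 'a set \<Rightarrow> bool" where
  "linkable T K \<longleftrightarrow> K \<subseteq> Per T \<and>
    (\<forall>y1\<in>K. \<forall>y2\<in>K. \<forall>\<epsilon>>0. \<forall>lam\<in>{0..1::real}.
      \<exists>p1 p2 q1 q2 :: nat. \<exists>z\<in>K.
        p1 \<ge> 1 \<and> p2 \<ge> 1 \<and> q1 \<ge> 1 \<and> q2 \<ge> 1 \<and>
        (T ^^ q2) z = z \<and>
        lam - \<epsilon> \<le> real p1 / (real p1 + real p2) \<and> real p1 / (real p1 + real p2) \<le> lam + \<epsilon> \<and>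
        p1 \<le> q1 \<and> real q1 \<le> (1 + \<epsilon>) * real p1 \<and> z \<in> bowen_ball T y1 p1 \<epsilon> \<and>
        real p2 \<le> real q2 - real q1 \<and> real q2 - real q1 \<le> (1 + \<epsilon>) * real p2 \<and>
        (T ^^ q1) z \<in> bowen_ball T y2 p2 \<epsilon>)"

end

theory Submission
  imports Defs
begin


lemma sets_mcomb[simp]: "sets (mcomb I c N) = sets borel"
  unfolding mcomb_def by (metis sets.sigma_sets_eq sets_measure_of space_borel sets.space_closed)

lemma space_mcomb[simp]: "space (mcomb I c N) = UNIV"
  using sets_eq_imp_space_eq[OF sets_mcomb[of I c N]] by simp

lemma meas_borel_eq: "sets M = sets borel \<Longrightarrow> u \<in> borel_measurable borel \<Longrightarrow> u \<in> borel_measurable M"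
  by (subst measurable_cong_sets[of M borel]) simp_all

lemma mcomb_emeasure:
  fixes N :: "'i \<Rightarrow> 'a::topological_space measure"
  assumes "finite I" "\<And>i. i\<in>I \<Longrightarrow> sets (N i) = sets borel" "A \<in> sets borel"
  shows "emeasure (mcomb I c N) A = (\<Sum>i\<in>I. ennreal (c i) * emeasure (N i) A)"
  unfolding mcomb_def
proof (rule emeasure_measure_of_sigma)
  show "sigma_algebra UNIV (sets borel)"
    by (metis sets.sigma_algebra_axioms space_borel)
  show "positive (sets borel) (\<lambda>A. \<Sum>i\<in>I. ennreal (c i) * emeasure (N i) A)"
    by (simp add: positive_def)
  show "countably_additive (sets borel) (\<lambda>A. \<Sum>i\<in>I. ennreal (c i) * emeasure (N i) A)"
    unfolding countably_additive_def
  proof (intro allI impI)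
    fix A :: "nat \<Rightarrow> 'a set" assume r: "range A \<subseteq> sets borel" and d: "disjoint_family A"
    have "(\<Sum>n. \<Sum>i\<in>I. ennreal (c i) * emeasure (N i) (A n))
        = (\<Sum>i\<in>I. \<Sum>n. ennreal (c i) * emeasure (N i) (A n))"
      by (rule suminf_sum) simp
    also have "\<dots> = (\<Sum>i\<in>I. ennreal (c i) * emeasure (N i) (\<Union>n. A n))"
    proof (rule sum.cong)
      fix i assume "i \<in> I"
      then have "range A \<subseteq> sets (N i)" using r assms(2) by auto
      then show "(\<Sum>n. ennreal (c i) * emeasure (N i) (A n)) = ennreal (c i) * emeasure (N i) (\<Union>n. A n)"
        using suminf_emeasure[OF _ d] by simp
    qed simp
    finally show "(\<Sum>n. \<Sum>i\<in>I. ennreal (c i) * emeasure (N i) (A n)) = (\<Sum>i\<in>I. ennreal (c i) * emeasure (N i) (\<Union> (range A)))" by simp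
  qed
qed (use assms in auto)

lemma mcomb_nn_integral:
  assumes "finite I" "\<And>i. i\<in>I \<Longrightarrow> sets (N i) = sets borel" "u \<in> borel_measurable borel"
  shows "(\<integral>\<^sup>+x. u x \<partial>mcomb I c N) = (\<Sum>i\<in>I. ennreal (c i) * (\<integral>\<^sup>+x. u x \<partial>N i))"
  using assms(3)
proof (induct rule: borel_measurable_induct)
  case (cong f g)
  then have "f = g" by auto
  then show ?case using cong by simp
next
  case (set A)
  have "(\<integral>\<^sup>+x. indicator A x \<partial>mcomb I c N) = emeasure (mcomb I c N) A"
    using set by (intro nn_integral_indicator) simp
  also have "\<dots> = (\<Sum>i\<in>I. ennreal (c i) * emeasure (N i) A)"
    using mcomb_emeasure[OF assms(1,2) set] by simp
  also have "\<dots> = (\<Sum>i\<in>I. ennreal (c i) * (\<integral>\<^sup>+x. indicator A x \<partial>N i))"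
    using set assms(2) by (intro sum.cong refl) (simp add: nn_integral_indicator)
  finally show ?case .
next
  case (mult u k)
  have m: "u \<in> borel_measurable (mcomb I c N)" by (rule meas_borel_eq[OF sets_mcomb mult(2)])
  have e: "(\<integral>\<^sup>+x. k * u x \<partial>N i) = k * (\<integral>\<^sup>+x. u x \<partial>N i)" if "i \<in> I" for i
  proof -
    have "u \<in> borel_measurable (N i)" by (rule meas_borel_eq[OF assms(2)[OF that] mult(2)])
    then show ?thesis by (rule nn_integral_cmult)
  qed
  have "(\<integral>\<^sup>+x. k * u x \<partial>mcomb I c N) = k * (\<integral>\<^sup>+x. u x \<partial>mcomb I c N)"
    using m by (rule nn_integral_cmult)
  also have "\<dots> = k * (\<Sum>i\<in>I. ennreal (c i) * (\<integral>\<^sup>+x. u x \<partial>N i))"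
    using mult(4) by (simp only:)
  also have "\<dots> = (\<Sum>i\<in>I. ennreal (c i) * (k * (\<integral>\<^sup>+x. u x \<partial>N i)))"
    unfolding sum_distrib_left by (rule sum.cong[OF refl]) (rule mult.left_commute)
  also have "\<dots> = (\<Sum>i\<in>I. ennreal (c i) * (\<integral>\<^sup>+x. k * u x \<partial>N i))"
    by (rule sum.cong[OF refl]) (simp only: e)
  finally show ?case .
next
  case (add u v)
  have m: "u \<in> borel_measurable (mcomb I c N)" "v \<in> borel_measurable (mcomb I c N)"
    by (rule meas_borel_eq[OF sets_mcomb add(1)], rule meas_borel_eq[OF sets_mcomb add(4)])
  have "(\<integral>\<^sup>+x. v x + u x \<partial>mcomb I c N) = (\<integral>\<^sup>+x. v x \<partial>mcomb I c N) + (\<integral>\<^sup>+x. u x \<partial>mcomb I c N)"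
    by (rule nn_integral_add[OF m(2) m(1)])
  also have "\<dots> = (\<Sum>i\<in>I. ennreal (c i) * (\<integral>\<^sup>+x. v x + u x \<partial>N i))"
    unfolding add(3) add(7) sum.distrib[symmetric]
  proof (intro sum.cong refl)
    fix i assume "i \<in> I"
    have "u \<in> borel_measurable (N i)" "v \<in> borel_measurable (N i)"
      by (rule meas_borel_eq[OF assms(2)[OF \<open>i \<in> I\<close>] add(1)], rule meas_borel_eq[OF assms(2)[OF \<open>i \<in> I\<close>] add(4)])
    then show "ennreal (c i) * integral\<^sup>N (N i) v + ennreal (c i) * integral\<^sup>N (N i) u = ennreal (c i) * (\<integral>\<^sup>+x. v x + u x \<partial>N i)"
      using nn_integral_add[of v "N i" u] by (metis distrib_left)
  qed
  finally show ?case .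
next
  case (seq U)
  have m: "\<And>k. U k \<in> borel_measurable (mcomb I c N)" by (rule meas_borel_eq[OF sets_mcomb seq(1)])
  have "(\<integral>\<^sup>+x. (SUP k. U k) x \<partial>mcomb I c N) = (SUP k. \<integral>\<^sup>+x. U k x \<partial>mcomb I c N)"
    unfolding SUP_apply by (rule nn_integral_monotone_convergence_SUP[OF seq(4) m])
  also have "\<dots> = (SUP k. \<Sum>i\<in>I. ennreal (c i) * (\<integral>\<^sup>+x. U k x \<partial>N i))"
    using seq(3) by (simp only:)
  also have "\<dots> = (\<Sum>i\<in>I. SUP k. ennreal (c i) * (\<integral>\<^sup>+x. U k x \<partial>N i))"
  proof (rule ennreal_SUP_sum)
    fix i assume "i \<in> I"
    show "incseq (\<lambda>k. ennreal (c i) * (\<integral>\<^sup>+x. U k x \<partial>N i))"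
      using seq(4) unfolding incseq_def le_fun_def
      by (auto intro!: mult_left_mono nn_integral_mono)
  qed
  also have "\<dots> = (\<Sum>i\<in>I. ennreal (c i) * (\<integral>\<^sup>+x. (SUP k. U k) x \<partial>N i))"
  proof (intro sum.cong refl)
    fix i assume "i \<in> I"
    have mi: "\<And>k. U k \<in> borel_measurable (N i)" by (rule meas_borel_eq[OF assms(2)[OF \<open>i \<in> I\<close>] seq(1)])
    have "(\<integral>\<^sup>+x. (SUP k. U k) x \<partial>N i) = (SUP k. \<integral>\<^sup>+x. U k x \<partial>N i)"
      unfolding SUP_apply by (rule nn_integral_monotone_convergence_SUP[OF seq(4) mi])
    then show "(SUP k. ennreal (c i) * (\<integral>\<^sup>+x. U k x \<partial>N i)) = ennreal (c i) * (\<integral>\<^sup>+x. (SUP k. U k) x \<partial>N i)"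
      by (simp add: SUP_mult_left_ennreal)
  qed
  finally show ?case .
qed

lemma mcomb_finite:
  assumes "finite I" "\<And>i. i\<in>I \<Longrightarrow> sets (N i) = sets borel" "\<And>i. i\<in>I \<Longrightarrow> finite_measure (N i)"
  shows "finite_measure (mcomb I c N)"
proof (rule finite_measureI)
  have U: "UNIV \<in> sets borel" by simp
  have "emeasure (mcomb I c N) (space (mcomb I c N)) = (\<Sum>i\<in>I. ennreal (c i) * emeasure (N i) UNIV)"
    using mcomb_emeasure[OF assms(1,2) U] by simp
  also have "\<dots> < top"
  proof -
    have "emeasure (N i) UNIV < top" if "i \<in> I" for i
    proof -
      have "UNIV = space (N i)" using sets_eq_imp_space_eq[OF assms(2)[OF that]] by simp
      then show ?thesis using finite_measure.emeasure_finite[OF assms(3)[OF that], of "space (N i)"]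
        by (simp add: top.not_eq_extremum)
    qed
    then show ?thesis using assms(1) by (simp add: ennreal_mult_less_top)
  qed
  finally show "emeasure (mcomb I c N) (space (mcomb I c N)) \<noteq> \<infinity>" by simp
qed

lemma mcomb_integral_nonneg:
  assumes I: "finite I" and c: "\<And>i. i\<in>I \<Longrightarrow> c i \<ge> 0"
    and S: "\<And>i. i\<in>I \<Longrightarrow> sets (N i) = sets borel" and F: "\<And>i. i\<in>I \<Longrightarrow> finite_measure (N i)"
    and g: "g \<in> borel_measurable borel" and nn: "\<And>x. 0 \<le> g x" and B: "\<And>x. g x \<le> B"
  shows "integral\<^sup>L (mcomb I c N) g = (\<Sum>i\<in>I. c i * integral\<^sup>L (N i) g)"
proof -
  have ab: "norm (g x) \<le> B" for x using nn B by simp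
  have intM: "integrable (mcomb I c N) g"
    by (rule finite_measure.integrable_const_bound[OF mcomb_finite[OF I S F], where B=B])
       (use ab meas_borel_eq[OF sets_mcomb g] in auto)
  have intN: "integrable (N i) g" if "i \<in> I" for i
    by (rule finite_measure.integrable_const_bound[OF F[OF that], where B=B])
       (use ab meas_borel_eq[OF S[OF that] g] in auto)
  have gm: "(\<lambda>x. ennreal (g x)) \<in> borel_measurable borel" using g by measurable
  have "ennreal (integral\<^sup>L (mcomb I c N) g) = (\<integral>\<^sup>+x. ennreal (g x) \<partial>mcomb I c N)"
    using nn_integral_eq_integral[OF intM] nn by simp
  also have "\<dots> = (\<Sum>i\<in>I. ennreal (c i) * (\<integral>\<^sup>+x. ennreal (g x) \<partial>N i))"
    by (rule mcomb_nn_integral[OF I S gm])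
  also have "\<dots> = (\<Sum>i\<in>I. ennreal (c i * integral\<^sup>L (N i) g))"
  proof (rule sum.cong[OF refl])
    fix i assume i: "i \<in> I"
    have "(\<integral>\<^sup>+x. ennreal (g x) \<partial>N i) = ennreal (integral\<^sup>L (N i) g)"
      using nn_integral_eq_integral[OF intN[OF i]] nn by simp
    then show "ennreal (c i) * (\<integral>\<^sup>+x. ennreal (g x) \<partial>N i) = ennreal (c i * integral\<^sup>L (N i) g)"
      using c[OF i] by (simp add: ennreal_mult')
  qed
  also have "\<dots> = ennreal (\<Sum>i\<in>I. c i * integral\<^sup>L (N i) g)"
    using c nn by (intro sum_ennreal) (simp add: integral_nonneg)
  finally show ?thesis
    using c nn by (subst (asm) ennreal_inj) (auto intro!: sum_nonneg integral_nonneg)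
qed

lemma mcomb_integral:
  assumes I: "finite I" and c: "\<And>i. i\<in>I \<Longrightarrow> c i \<ge> 0"
    and S: "\<And>i. i\<in>I \<Longrightarrow> sets (N i) = sets borel" and F: "\<And>i. i\<in>I \<Longrightarrow> finite_measure (N i)"
    and f: "f \<in> borel_measurable borel" and B: "\<And>x. \<bar>f x\<bar> \<le> B"
  shows "integral\<^sup>L (mcomb I c N) f = (\<Sum>i\<in>I. c i * integral\<^sup>L (N i) f)"
proof -
  define g where "g x = f x + B" for x
  have g: "g \<in> borel_measurable borel" unfolding g_def using f by measurable
  have gn: "0 \<le> g x" "g x \<le> 2 * B" for x using B[of x] unfolding g_def by auto
  have B0: "0 \<le> B" using B[of undefined] by simp
  have fg: "f x = g x - B" for x unfolding g_def by simp
  have cB: "(\<lambda>x. B) \<in> borel_measurable borel" by simp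
  have intM: "integrable (mcomb I c N) h" if "h \<in> borel_measurable borel" "\<And>x. norm (h x) \<le> 2*B" for h :: "_ \<Rightarrow> real"
    by (rule finite_measure.integrable_const_bound[OF mcomb_finite[OF I S F], where B="2*B"])
       (use that meas_borel_eq[OF sets_mcomb that(1)] in auto)
  have intN: "integrable (N i) h" if "i \<in> I" "h \<in> borel_measurable borel" "\<And>x. norm (h x) \<le> 2*B" for i and h :: "_ \<Rightarrow> real"
    by (rule finite_measure.integrable_const_bound[OF F[OF that(1)], where B="2*B"])
       (use that meas_borel_eq[OF S[OF that(1)] that(2)] in auto)
  have e1: "integral\<^sup>L (mcomb I c N) g = (\<Sum>i\<in>I. c i * integral\<^sup>L (N i) g)"
    by (rule mcomb_integral_nonneg[OF I c S F g gn(1) gn(2)])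
  have e2: "integral\<^sup>L (mcomb I c N) (\<lambda>x. B) = (\<Sum>i\<in>I. c i * integral\<^sup>L (N i) (\<lambda>x. B))"
    by (rule mcomb_integral_nonneg[OF I c S F cB B0 order.refl])
  have nB: "norm (B::real) \<le> 2 * B" using B0 by simp
  have fe: "f = (\<lambda>x. g x - B)" using fg by auto
  have ng: "norm (g x) \<le> 2 * B" for x using gn[of x] by simp
  have iMg: "integrable (mcomb I c N) g" by (rule intM[OF g ng])
  have iMB: "integrable (mcomb I c N) (\<lambda>x. B)" by (rule intM[OF cB nB])
  have "integral\<^sup>L (mcomb I c N) f = integral\<^sup>L (mcomb I c N) g - integral\<^sup>L (mcomb I c N) (\<lambda>x. B)"
    unfolding fe by (rule Bochner_Integration.integral_diff[OF iMg iMB])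
  also have "\<dots> = (\<Sum>i\<in>I. c i * (integral\<^sup>L (N i) g - integral\<^sup>L (N i) (\<lambda>x. B)))"
    unfolding e1 e2 by (simp add: sum_subtractf right_diff_distrib)
  also have "\<dots> = (\<Sum>i\<in>I. c i * integral\<^sup>L (N i) f)"
  proof (rule sum.cong[OF refl])
    fix i assume i: "i \<in> I"
    have "integral\<^sup>L (N i) f = integral\<^sup>L (N i) g - integral\<^sup>L (N i) (\<lambda>x. B)"
      unfolding fe by (rule Bochner_Integration.integral_diff[OF intN[OF i g ng] intN[OF i cB nB]])
    then show "c i * (integral\<^sup>L (N i) g - integral\<^sup>L (N i) (\<lambda>x. B)) = c i * integral\<^sup>L (N i) f" by simp
  qed
  finally show ?thesis .
qed



definition nbhd :: "'a::metric_space measure \<Rightarrow> ('a \<Rightarrow> real) set \<Rightarrow> real \<Rightarrow> 'a measure set" where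
  "nbhd \<mu> F e = {\<nu> \<in> prob_measures. \<forall>f\<in>F. \<bar>(\<integral>x. f x \<partial>\<nu>) - (\<integral>x. f x \<partial>\<mu>)\<bar> < e}"

definition BC :: "('a::metric_space \<Rightarrow> real) \<Rightarrow> bool" where
  "BC f \<longleftrightarrow> continuous_on UNIV f \<and> bounded (range f)"

lemma topspace_ws: "topspace (weak_star :: 'a::metric_space measure topology) = prob_measures"
proof -
  let ?S = "{{\<mu> \<in> prob_measures. (\<integral>x. f x \<partial>\<mu>) \<in> U} | f U. continuous_on UNIV f \<and> bounded (range f) \<and> open (U :: real set)} :: 'a measure set set"
  have 1: "\<Union>?S \<subseteq> prob_measures" by blast
  have 2: "prob_measures \<subseteq> \<Union>?S"
  proof
    fix \<mu> :: "'a measure" assume "\<mu> \<in> prob_measures"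
    moreover have "{\<nu> \<in> prob_measures. (\<integral>x. (\<lambda>_. 0::real) x \<partial>\<nu>) \<in> UNIV} \<in> ?S"
      by (intro CollectI exI[of _ "\<lambda>_. 0::real"] exI[of _ UNIV]) auto
    ultimately show "\<mu> \<in> \<Union>?S" by blast
  qed
  show ?thesis unfolding weak_star_def topology_generated_by_topspace using 1 2 by blast
qed

lemma sub_in: "BC f \<Longrightarrow> open U \<Longrightarrow> openin weak_star {\<mu> \<in> prob_measures. (\<integral>x. f x \<partial>\<mu>) \<in> U}"
  unfolding weak_star_def BC_def
  by (rule topology_generated_by_Basis) blast

lemma nbhd_open:
  assumes "finite F" "\<And>f. f\<in>F \<Longrightarrow> BC f"
  shows "openin weak_star (nbhd \<mu> F e)"
  using assms
proof (induction F rule: finite_induct)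
  case empty
  have "nbhd \<mu> {} e = prob_measures" unfolding nbhd_def by simp
  then show ?case using openin_topspace[of "weak_star :: 'a measure topology"] by (simp add: topspace_ws)
next
  case (insert f F)
  have eq: "nbhd \<mu> (insert f F) e = nbhd \<mu> F e \<inter> {\<nu> \<in> prob_measures. (\<integral>x. f x \<partial>\<nu>) \<in> ball (\<integral>x. f x \<partial>\<mu>) e}"
    unfolding nbhd_def by (auto simp: dist_real_def abs_minus_commute)
  show ?case unfolding eq
    by (intro openin_Int insert.IH sub_in insert.prems) auto
qed

lemma nbhd_inside:
  assumes "generate_topology_on {{\<mu> \<in> prob_measures. (\<integral>x. f x \<partial>\<mu>) \<in> U} | f U.
        continuous_on UNIV f \<and> bounded (range f) \<and> open (U :: real set)} W" "(\<mu>::'a::metric_space measure) \<in> W"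
  shows "\<exists>F e. finite F \<and> (\<forall>f\<in>F. BC f) \<and> e > 0 \<and> nbhd \<mu> F e \<subseteq> W"
  using assms
proof (induction rule: generate_topology_on.induct)
  case Empty
  then show ?case by simp
next
  case (Int a b)
  have ab: "\<mu> \<in> a" "\<mu> \<in> b" using Int.prems by auto
  obtain F1 e1 F2 e2 where 1: "finite F1" "\<forall>f\<in>F1. BC f" "e1 > 0" "nbhd \<mu> F1 e1 \<subseteq> a"
    and 2: "finite F2" "\<forall>f\<in>F2. BC f" "e2 > 0" "nbhd \<mu> F2 e2 \<subseteq> b" using Int.IH(1)[OF ab(1)] Int.IH(2)[OF ab(2)] by blast
  have "nbhd \<mu> (F1 \<union> F2) (min e1 e2) \<subseteq> a \<inter> b"
    using 1(4) 2(4) unfolding nbhd_def by fastforce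
  moreover have "finite (F1 \<union> F2)" "\<forall>f\<in>F1 \<union> F2. BC f" "min e1 e2 > 0" using 1 2 by auto
  ultimately show ?case by blast
next
  case (UN K)
  from UN.prems obtain k where k: "k \<in> K" "\<mu> \<in> k" by blast
  obtain F e where "finite F" "\<forall>f\<in>F. BC f" "e > 0" "nbhd \<mu> F e \<subseteq> k" using UN.IH[OF k] by blast
  moreover have "nbhd \<mu> F e \<subseteq> \<Union>K" using calculation(4) k(1) by blast
  ultimately show ?case by blast
next
  case (Basis s)
  from Basis.hyps obtain f :: "'a \<Rightarrow> real" and U :: "real set" where s: "s = {\<mu> \<in> prob_measures. (\<integral>x. f x \<partial>\<mu>) \<in> U}" "continuous_on UNIV f"
    "bounded (range f)" "open U" by blast
  have "(\<integral>x. f x \<partial>\<mu>) \<in> U" using Basis.prems s(1) by blast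
  then obtain e where e: "e > 0" "ball (\<integral>x. f x \<partial>\<mu>) e \<subseteq> U" using s(4) open_contains_ball by blast
  have "nbhd \<mu> {f} e \<subseteq> s"
  proof
    fix \<nu> assume "\<nu> \<in> nbhd \<mu> {f} e"
    then have "\<nu> \<in> prob_measures" "\<bar>(\<integral>x. f x \<partial>\<nu>) - (\<integral>x. f x \<partial>\<mu>)\<bar> < e" unfolding nbhd_def by auto
    moreover from this(2) have "(\<integral>x. f x \<partial>\<nu>) \<in> ball (\<integral>x. f x \<partial>\<mu>) e"
      unfolding mem_ball dist_real_def by linarith
    ultimately show "\<nu> \<in> s" using e(2) s(1) by blast
  qed
  moreover have "BC f" using s(2,3) by (simp add: BC_def)
  ultimately show ?case using e(1) by blast
qed

lemma closure_sub_P: "weak_star closure_of S \<subseteq> prob_measures"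
  using closure_of_subset_topspace[of weak_star S] unfolding topspace_ws .

lemma closure_approx:
  assumes "\<mu> \<in> weak_star closure_of S" "finite F" "\<And>f. f\<in>F \<Longrightarrow> BC f" "e > 0"
  shows "\<exists>s\<in>S. \<forall>f\<in>F. \<bar>(\<integral>x. f x \<partial>s) - (\<integral>x. f x \<partial>\<mu>)\<bar> < e"
proof -
  have "\<mu> \<in> prob_measures" using assms(1) closure_sub_P by (rule subsetD[rotated])
  then have m: "\<mu> \<in> nbhd \<mu> F e" using assms(4) unfolding nbhd_def by auto
  from assms(1)[unfolded in_closure_of] have "\<forall>T. \<mu> \<in> T \<and> openin weak_star T \<longrightarrow> (\<exists>y. y \<in> S \<and> y \<in> T)"
    by (rule conjunct2)
  then have "\<exists>y. y \<in> S \<and> y \<in> nbhd \<mu> F e" using m nbhd_open[OF assms(2,3)] by blast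
  then obtain s where "s \<in> S" "s \<in> nbhd \<mu> F e" by blast
  then show ?thesis unfolding nbhd_def by auto
qed

lemma closure_approxI:
  assumes "\<mu> \<in> prob_measures"
    and "\<And>F e. finite F \<Longrightarrow> (\<forall>f\<in>F. BC f) \<Longrightarrow> e > 0 \<Longrightarrow> \<exists>s\<in>S. s \<in> nbhd \<mu> F e"
  shows "\<mu> \<in> weak_star closure_of S"
  unfolding in_closure_of topspace_ws
proof (intro conjI allI impI)
  show "\<mu> \<in> prob_measures" by (rule assms(1))
next
  fix W assume W: "\<mu> \<in> W \<and> openin weak_star W"
  then have "openin weak_star W" by (rule conjunct2)
  then have "generate_topology_on {{\<mu> \<in> prob_measures. (\<integral>x. f x \<partial>\<mu>) \<in> U} | f U.
        continuous_on UNIV f \<and> bounded (range f) \<and> open (U :: real set)} W"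
    unfolding weak_star_def by (rule openin_topology_generated_by)
  from nbhd_inside[OF this conjunct1[OF W]] obtain F e where "finite F" "\<forall>f\<in>F. BC f" "e > 0" "nbhd \<mu> F e \<subseteq> W" by blast
  then obtain s where "s \<in> S" "s \<in> nbhd \<mu> F e" using assms(2) by blast
  then show "\<exists>y. y \<in> S \<and> y \<in> W" using \<open>nbhd \<mu> F e \<subseteq> W\<close> by blast
qed



lemma funpow_period_mult: "(T ^^ k) y = y \<Longrightarrow> (T ^^ (m * k)) y = y"
proof (induction m)
  case 0 then show ?case by simp
next
  case (Suc m)
  have "(T ^^ (Suc m * k)) y = (T ^^ k) ((T ^^ (m * k)) y)"
    by (simp add: funpow_add)
  then show ?case using Suc by simp
qed

lemma funpow_period_mod: "(T ^^ k) y = y \<Longrightarrow> (T ^^ j) y = (T ^^ (j mod k)) y"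
proof -
  assume a: "(T ^^ k) y = y"
  have "j = j mod k + (j div k) * k" by simp
  then have "(T ^^ j) y = (T ^^ (j mod k)) ((T ^^ ((j div k) * k)) y)"
    by (metis comp_apply funpow_add)
  then show ?thesis using funpow_period_mult[OF a] by simp
qed

lemma sum_split_nat: "(\<Sum>j<a+b. g j) = (\<Sum>j<a. g j) + (\<Sum>j<b. g (a+j)) "
  for g :: "nat \<Rightarrow> real"
  by (induction b) (simp_all add: add.assoc)

lemma sum_split_le: "a \<le> b \<Longrightarrow> (\<Sum>j<b. g j) = (\<Sum>j<a. g j) + (\<Sum>j<b-a. g (a+j))"
  for g :: "nat \<Rightarrow> real"
  using sum_split_nat[of g a "b-a"] by simp

lemma periodic_sum:
  fixes f :: "'a \<Rightarrow> real"
  assumes "(T ^^ k) y = y"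
  shows "(\<Sum>j<m*k + r. f ((T ^^ j) y)) = real m * (\<Sum>j<k. f ((T ^^ j) y)) + (\<Sum>j<r. f ((T ^^ j) y))"
proof (induction m)
  case 0 then show ?case by simp
next
  case (Suc m)
  have "(\<Sum>j<Suc m*k + r. f ((T ^^ j) y)) = (\<Sum>j<k + (m*k + r). f ((T ^^ j) y))"
    by (simp add: add.assoc)
  also have "\<dots> = (\<Sum>j<k. f ((T ^^ j) y)) + (\<Sum>j<m*k + r. f ((T ^^ (k + j)) y))"
    by (rule sum_split_nat)
  also have "(\<Sum>j<m*k + r. f ((T ^^ (k + j)) y)) = (\<Sum>j<m*k + r. f ((T ^^ j) y))"
  proof (rule sum.cong[OF refl])
    fix j
    have "(T ^^ (k + j)) y = (T ^^ j) ((T ^^ k) y)"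
      by (metis add.commute comp_apply funpow_add)
    then show "f ((T ^^ (k + j)) y) = f ((T ^^ j) y)" using assms by simp
  qed
  finally show ?case using Suc by (simp add: algebra_simps)
qed

lemma sum_abs_bound:
  fixes h :: "nat \<Rightarrow> real"
  assumes "\<And>j. \<bar>h j\<bar> \<le> B"
  shows "\<bar>\<Sum>j<m. h j\<bar> \<le> real m * B"
proof -
  have "\<bar>\<Sum>j<m. h j\<bar> \<le> (\<Sum>j<m. \<bar>h j\<bar>)" by (rule sum_abs)
  also have "\<dots> \<le> (\<Sum>j<m. B)" by (rule sum_mono) (use assms in auto)
  finally show ?thesis by simp
qed

lemma lin_abs3: "\<bar>Y\<bar> \<le> W \<Longrightarrow> Z \<le> W \<Longrightarrow> \<bar>R\<bar> \<le> Z \<Longrightarrow> \<bar>R - Y\<bar> \<le> 2 * (W::real)"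
  by linarith

lemma per_sum_bound:
  fixes f :: "'a \<Rightarrow> real"
  assumes "(T ^^ k) y = y" "k > 0" "\<And>x. \<bar>f x\<bar> \<le> B"
  shows "\<bar>(\<Sum>j<p. f ((T ^^ j) y)) - real p * ((\<Sum>j<k. f ((T ^^ j) y)) / real k)\<bar> \<le> 2 * real k * B"
proof -
  define S where "S = (\<Sum>j<k. f ((T ^^ j) y))"
  define R where "R = (\<Sum>j<p mod k. f ((T ^^ j) y))"
  have p: "p = (p div k) * k + p mod k" by simp
  have e1: "(\<Sum>j<p. f ((T ^^ j) y)) = real (p div k) * S + R"
    unfolding S_def R_def using periodic_sum[OF assms(1), of f "p div k" "p mod k"] p by simp
  have e2: "real p * (S / real k) = real (p div k) * S + real (p mod k) * (S / real k)"
  proof -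
    have "real p = real (p div k) * real k + real (p mod k)" using p
      by (metis of_nat_add of_nat_mult)
    then show ?thesis using assms(2) by (simp add: field_simps)
  qed
  have B0: "0 \<le> B" using assms(3)[of undefined] by simp
  have S: "\<bar>S\<bar> \<le> real k * B" unfolding S_def by (rule sum_abs_bound) (use assms(3) in auto)
  have R: "\<bar>R\<bar> \<le> real (p mod k) * B" unfolding R_def by (rule sum_abs_bound) (use assms(3) in auto)
  have mk: "real (p mod k) \<le> real k" using assms(2) by simp
  have SB: "\<bar>S / real k\<bar> \<le> B" using S assms(2) by (simp add: divide_le_eq abs_divide mult.commute)
  have "\<bar>real (p mod k) * (S / real k)\<bar> \<le> real k * B"
  proof -
    have "\<bar>real (p mod k) * (S / real k)\<bar> = real (p mod k) * \<bar>S / real k\<bar>" by (simp add: abs_mult)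
    also have "\<dots> \<le> real k * B" by (rule mult_mono[OF mk SB]) (use B0 in auto)
    finally show ?thesis .
  qed
  moreover have "real (p mod k) * B \<le> real k * B" using mk B0 by (rule mult_right_mono)
  ultimately have "\<bar>R - real (p mod k) * (S / real k)\<bar> \<le> 2 * (real k * B)"
    using R by (intro lin_abs3) 
  moreover have eq: "real (p div k) * S + R - (real (p div k) * S + real (p mod k) * (S / real k)) = R - real (p mod k) * (S / real k)"
    by simp
  ultimately show ?thesis unfolding S_def[symmetric] e1 e2 eq by (simp add: mult.assoc)
qed

lemma min_period_props:
  assumes "y \<in> Per T"
  shows "min_period T y > 0" "(T ^^ min_period T y) y = y"
    "\<And>q. q > 0 \<Longrightarrow> (T ^^ q) y = y \<Longrightarrow> min_period T y dvd q"
proof -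
  obtain n where n: "n > 0" "(T ^^ n) y = y" using assms unfolding Per_def by blast
  have L: "min_period T y > 0 \<and> (T ^^ min_period T y) y = y"
    unfolding min_period_def by (rule LeastI[of _ n]) (use n in auto)
  then show "min_period T y > 0" "(T ^^ min_period T y) y = y" by auto
  fix q assume q: "q > 0" "(T ^^ q) y = y"
  let ?k = "min_period T y"
  have fx: "(T ^^ (q mod ?k)) y = y" using funpow_period_mod[OF L[THEN conjunct2], of q] q by simp
  have "q mod ?k < ?k" using L by simp
  then have "q mod ?k < (LEAST n. n > 0 \<and> (T ^^ n) y = y)" by (simp only: min_period_def)
  then have "\<not> (q mod ?k > 0 \<and> (T ^^ (q mod ?k)) y = y)" by (rule not_less_Least)
  then have "q mod ?k = 0" using fx by simp
  then show "?k dvd q" by (simp add: dvd_eq_mod_eq_0)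
qed



definition avg :: "('a \<Rightarrow> 'a) \<Rightarrow> 'a \<Rightarrow> ('a \<Rightarrow> real) \<Rightarrow> real" where
  "avg T y f = (\<Sum>j<min_period T y. f ((T ^^ j) y)) / real (min_period T y)"

lemma gamma_eq: "gamma T y = mcomb {..<min_period T y} (\<lambda>_. 1 / real (min_period T y)) (\<lambda>j. return borel ((T ^^ j) y))"
  unfolding gamma_def Let_def ..

lemma gamma_prob:
  assumes "y \<in> Per T"
  shows "gamma T y \<in> prob_measures"
proof -
  let ?k = "min_period T y"
  have k: "?k > 0" using min_period_props(1)[OF assms] .
  have U: "UNIV \<in> sets borel" by simp
  have "emeasure (gamma T y) UNIV = (\<Sum>j<?k. ennreal (1 / real ?k) * emeasure (return borel ((T ^^ j) y)) UNIV)"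
    unfolding gamma_eq by (rule mcomb_emeasure) simp_all
  also have "\<dots> = (\<Sum>j<?k. ennreal (1 / real ?k))" by simp
  also have "\<dots> = ennreal (\<Sum>j<?k. 1 / real ?k)" by (rule sum_ennreal) simp
  also have "\<dots> = 1" using k by simp
  finally have "emeasure (gamma T y) (space (gamma T y)) = 1" unfolding gamma_eq by simp
  then have "prob_space (gamma T y)" by (rule prob_spaceI)
  then show ?thesis unfolding prob_measures_def gamma_eq by simp
qed

lemma gamma_integral:
  assumes "y \<in> Per T" "f \<in> borel_measurable borel" "\<And>x. \<bar>f x\<bar> \<le> B"
  shows "(\<integral>x. f x \<partial>gamma T y) = avg T y f"
proof -
  let ?k = "min_period T y"
  have "(\<integral>x. f x \<partial>gamma T y) = (\<Sum>j<?k. 1 / real ?k * (\<integral>x. f x \<partial>return borel ((T ^^ j) y)))"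
    unfolding gamma_eq
    by (rule mcomb_integral[OF _ _ _ _ assms(2,3)]) (auto intro!: prob_space.finite_measure prob_space_return)
  also have "\<dots> = (\<Sum>j<?k. 1 / real ?k * f ((T ^^ j) y))"
    using assms(2) by (simp add: integral_return)
  also have "\<dots> = avg T y f" unfolding avg_def by (simp add: sum_divide_distrib)
  finally show ?thesis .
qed

lemma avg_period:
  assumes "y \<in> Per T" "(T ^^ q) y = y" "q > 0"
  shows "avg T y f = (\<Sum>j<q. f ((T ^^ j) y)) / real q"
proof -
  let ?k = "min_period T y"
  have k: "?k > 0" "(T ^^ ?k) y = y" using min_period_props[OF assms(1)] by auto
  have "?k dvd q" using min_period_props(3)[OF assms(1) assms(3,2)] .
  then obtain m where m: "q = m * ?k" by (metis dvd_def mult.commute)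
  have "(\<Sum>j<q. f ((T ^^ j) y)) = real m * (\<Sum>j<?k. f ((T ^^ j) y))"
    using periodic_sum[OF k(2), of f m 0] m by simp
  moreover have "real q = real m * real ?k" using m by simp
  moreover have "m > 0" using m assms(3) by (cases m) auto
  ultimately show ?thesis unfolding avg_def using k(1) by simp
qed

lemma mix_eq: "mix t \<mu> \<nu> = mcomb UNIV (\<lambda>b. if b then t else 1 - t) (\<lambda>b. if b then \<mu> else \<nu>)"
  unfolding mix_def mcomb_def UNIV_bool by (simp add: add.commute)

lemma mix_prob:
  assumes "\<mu> \<in> prob_measures" "\<nu> \<in> prob_measures" "t \<in> {0..1}"
  shows "mix t \<mu> \<nu> \<in> prob_measures"
proof -
  have sm: "sets \<mu> = sets borel" "sets \<nu> = sets borel" "prob_space \<mu>" "prob_space \<nu>"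
    using assms unfolding prob_measures_def by auto
  have sp: "space \<mu> = UNIV" "space \<nu> = UNIV"
    using sets_eq_imp_space_eq[OF sm(1)] sets_eq_imp_space_eq[OF sm(2)] by auto
  have U: "UNIV \<in> sets borel" by simp
  have "emeasure (mix t \<mu> \<nu>) UNIV = (\<Sum>b\<in>UNIV. ennreal (if b then t else 1 - t) * emeasure (if b then \<mu> else \<nu>) UNIV)"
    unfolding mix_eq by (rule mcomb_emeasure) (use sm in auto)
  also have "\<dots> = ennreal (1 - t) + ennreal t"
    using prob_space.emeasure_space_1[OF sm(3)] prob_space.emeasure_space_1[OF sm(4)] sp
    by (simp add: UNIV_bool)
  also have "\<dots> = 1" using assms(3) by (simp add: ennreal_plus[symmetric] del: ennreal_plus)
  finally have "emeasure (mix t \<mu> \<nu>) (space (mix t \<mu> \<nu>)) = 1" unfolding mix_eq by simp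
  then have "prob_space (mix t \<mu> \<nu>)" by (rule prob_spaceI)
  then show ?thesis unfolding prob_measures_def mix_eq by simp
qed

lemma mix_integral:
  assumes "\<mu> \<in> prob_measures" "\<nu> \<in> prob_measures" "t \<in> {0..1}"
    "f \<in> borel_measurable borel" "\<And>x. \<bar>f x\<bar> \<le> B"
  shows "(\<integral>x. f x \<partial>mix t \<mu> \<nu>) = t * (\<integral>x. f x \<partial>\<mu>) + (1 - t) * (\<integral>x. f x \<partial>\<nu>)"
proof -
  have sm: "sets \<mu> = sets borel" "sets \<nu> = sets borel" "prob_space \<mu>" "prob_space \<nu>"
    using assms unfolding prob_measures_def by auto
  have "(\<integral>x. f x \<partial>mix t \<mu> \<nu>) = (\<Sum>b\<in>UNIV. (if b then t else 1 - t) * (\<integral>x. f x \<partial>(if b then \<mu> else \<nu>)))"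
    unfolding mix_eq
    by (rule mcomb_integral[OF _ _ _ _ assms(4,5)]) (use sm assms(3) in \<open>auto intro: prob_space.finite_measure\<close>)
  then show ?thesis by (simp add: UNIV_bool)
qed



lemma track_sum:
  fixes f :: "'a::metric_space \<Rightarrow> real"
  assumes "(T ^^ k) y = y" "k > 0"
    and c: "\<forall>w\<in>(\<lambda>j. (T ^^ j) y) ` {..<k}. \<forall>u. dist u w < \<delta> \<longrightarrow> \<bar>f u - f w\<bar> < d1"
    and b: "\<forall>j<p. dist ((T ^^ j) w0) ((T ^^ j) y) < \<delta>"
  shows "\<bar>(\<Sum>j<p. f ((T ^^ j) w0)) - (\<Sum>j<p. f ((T ^^ j) y))\<bar> \<le> real p * d1"
proof -
  have "\<bar>(\<Sum>j<p. f ((T ^^ j) w0)) - (\<Sum>j<p. f ((T ^^ j) y))\<bar> = \<bar>\<Sum>j<p. f ((T ^^ j) w0) - f ((T ^^ j) y)\<bar>"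
    by (simp add: sum_subtractf)
  also have "\<dots> \<le> (\<Sum>j<p. \<bar>f ((T ^^ j) w0) - f ((T ^^ j) y)\<bar>)" by (rule sum_abs)
  also have "\<dots> \<le> (\<Sum>j<p. d1)"
  proof (rule sum_mono)
    fix j assume j: "j \<in> {..<p}"
    have "(T ^^ j) y = (T ^^ (j mod k)) y" by (rule funpow_period_mod[OF assms(1)])
    moreover have "j mod k \<in> {..<k}" using assms(2) by simp
    ultimately have "(T ^^ j) y \<in> (\<lambda>j. (T ^^ j) y) ` {..<k}" by auto
    then show "\<bar>f ((T ^^ j) w0) - f ((T ^^ j) y)\<bar> \<le> d1" using c b j by fastforce
  qed
  finally show ?thesis by simp
qed

lemma comb6:
  fixes a1 b1 c1 g1 a2 b2 c2 g2 :: real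
  shows "\<bar>a1 - b1\<bar> \<le> x1 \<Longrightarrow> \<bar>b1 - c1\<bar> \<le> x2 \<Longrightarrow> \<bar>g1\<bar> \<le> x3 \<Longrightarrow> \<bar>a2 - b2\<bar> \<le> y1 \<Longrightarrow> \<bar>b2 - c2\<bar> \<le> y2 \<Longrightarrow> \<bar>g2\<bar> \<le> y3 \<Longrightarrow>
    \<bar>(a1 + g1 + (a2 + g2)) - (c1 + c2)\<bar> \<le> x1 + x2 + x3 + y1 + y2 + y3"
  by linarith

lemma core_est:
  fixes f :: "'a::metric_space \<Rightarrow> real"
  assumes P1: "(T ^^ k1) y1 = y1" "k1 > 0" and P2: "(T ^^ k2) y2 = y2" "k2 > 0"
    and fB: "\<And>x. \<bar>f x\<bar> \<le> B"
    and c1: "\<forall>w\<in>(\<lambda>j. (T ^^ j) y1) ` {..<k1}. \<forall>u. dist u w < \<delta> \<longrightarrow> \<bar>f u - f w\<bar> < d1"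
    and c2: "\<forall>w\<in>(\<lambda>j. (T ^^ j) y2) ` {..<k2}. \<forall>u. dist u w < \<delta> \<longrightarrow> \<bar>f u - f w\<bar> < d1"
    and q: "p1 \<le> q1" "q1 + p2 \<le> q2"
    and b1: "\<forall>j<p1. dist ((T ^^ j) z) ((T ^^ j) y1) < \<delta>"
    and b2: "\<forall>j<p2. dist ((T ^^ j) ((T ^^ q1) z)) ((T ^^ j) y2) < \<delta>"
  shows "\<bar>(\<Sum>j<q2. f ((T ^^ j) z)) - (real p1 * ((\<Sum>j<k1. f ((T ^^ j) y1)) / real k1)
            + real p2 * ((\<Sum>j<k2. f ((T ^^ j) y2)) / real k2))\<bar>
         \<le> (real p1 + real p2) * d1 + 2 * (real k1 + real k2) * B + (real q2 - (real p1 + real p2)) * B"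
proof -
  define g where "g j = f ((T ^^ j) z)" for j
  have s1: "(\<Sum>j<q2. g j) = (\<Sum>j<q1. g j) + (\<Sum>j<q2-q1. g (q1+j))"
    by (rule sum_split_le) (use q in simp)
  have s2: "(\<Sum>j<q1. g j) = (\<Sum>j<p1. g j) + (\<Sum>j<q1-p1. g (p1+j))"
    by (rule sum_split_le) (use q in simp)
  have s3: "(\<Sum>j<q2-q1. g (q1+j)) = (\<Sum>j<p2. g (q1+j)) + (\<Sum>j<q2-q1-p2. g (q1+(p2+j)))"
    using sum_split_le[of p2 "q2-q1" "\<lambda>j. g (q1+j)"] q by simp
  have gsh: "g (q1 + j) = f ((T ^^ j) ((T ^^ q1) z))" for j
    unfolding g_def by (metis add.commute comp_apply funpow_add)
  have t1: "\<bar>(\<Sum>j<p1. g j) - (\<Sum>j<p1. f ((T ^^ j) y1))\<bar> \<le> real p1 * d1"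
    unfolding g_def by (rule track_sum[OF P1 c1 b1])
  have t2: "\<bar>(\<Sum>j<p2. g (q1+j)) - (\<Sum>j<p2. f ((T ^^ j) y2))\<bar> \<le> real p2 * d1"
    unfolding gsh by (rule track_sum[OF P2 c2 b2])
  have r1: "\<bar>(\<Sum>j<p1. f ((T ^^ j) y1)) - real p1 * ((\<Sum>j<k1. f ((T ^^ j) y1)) / real k1)\<bar> \<le> 2 * real k1 * B"
    by (rule per_sum_bound[OF P1 fB])
  have r2: "\<bar>(\<Sum>j<p2. f ((T ^^ j) y2)) - real p2 * ((\<Sum>j<k2. f ((T ^^ j) y2)) / real k2)\<bar> \<le> 2 * real k2 * B"
    by (rule per_sum_bound[OF P2 fB])
  have gp1: "\<bar>\<Sum>j<q1-p1. g (p1+j)\<bar> \<le> real (q1-p1) * B"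
    by (rule sum_abs_bound) (simp add: g_def fB)
  have gp2: "\<bar>\<Sum>j<q2-q1-p2. g (q1+(p2+j))\<bar> \<le> real (q2-q1-p2) * B"
    by (rule sum_abs_bound) (simp add: g_def fB)
  have L: "real (q1-p1) + real (q2-q1-p2) = real q2 - (real p1 + real p2)"
    using q by (simp add: of_nat_diff)
  have "\<bar>(\<Sum>j<p1. g j) + (\<Sum>j<q1-p1. g (p1+j)) + ((\<Sum>j<p2. g (q1+j)) + (\<Sum>j<q2-q1-p2. g (q1+(p2+j))))
       - (real p1 * ((\<Sum>j<k1. f ((T ^^ j) y1)) / real k1) + real p2 * ((\<Sum>j<k2. f ((T ^^ j) y2)) / real k2))\<bar>
     \<le> real p1 * d1 + 2 * real k1 * B + real (q1-p1) * B + real p2 * d1 + 2 * real k2 * B + real (q2-q1-p2) * B"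
    by (rule comb6[OF t1 r1 gp1 t2 r2 gp2])
  also have "\<dots> = (real p1 + real p2) * d1 + 2 * (real k1 + real k2) * B + (real (q1-p1) + real (q2-q1-p2)) * B"
    by (simp add: algebra_simps)
  finally show ?thesis unfolding L g_def[symmetric] s1 s2 s3 by simp
qed



lemma abs3: "\<bar>x + y + z\<bar> \<le> \<bar>x\<bar> + \<bar>y\<bar> + \<bar>z::real\<bar>" by linarith

lemma final_arith:
  fixes P Q Az A1 A2 p1 t lam \<epsilon> \<eta> d1 B K e :: real
  assumes P: "P > 0" "P \<le> Q" "Q - P \<le> \<epsilon> * P"
    and E: "\<bar>Q * Az - (p1 * A1 + (P - p1) * A2)\<bar> \<le> P * d1 + K + (Q - P) * B"
    and A: "\<bar>A1\<bar> \<le> B" "\<bar>A2\<bar> \<le> B"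
    and t: "0 \<le> t" "t \<le> 1"
    and r: "\<bar>p1 - lam * P\<bar> \<le> \<epsilon> * P" and l: "\<bar>lam - t\<bar> \<le> \<eta>"
    and K: "K \<le> P * (e / 8)" and d1: "d1 = e / 8" and eB: "\<epsilon> * B \<le> e / 32" and hB: "\<eta> * B \<le> e / 16"
    and e: "e > 0" and B0: "B \<ge> 0" and pos: "\<epsilon> \<ge> 0" "\<eta> \<ge> 0"
  shows "\<bar>Az - (t * A1 + (1 - t) * A2)\<bar> < e"
proof -
  define M where "M = t * A1 + (1 - t) * A2"
  have tA1: "\<bar>t * A1\<bar> \<le> t * B" using A(1) t by (simp add: abs_mult mult_left_mono)
  have tA2: "\<bar>(1 - t) * A2\<bar> \<le> (1 - t) * B" using A(2) t by (simp add: abs_mult mult_left_mono)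
  have MB: "\<bar>M\<bar> \<le> B" unfolding M_def using tA1 tA2 by (simp add: algebra_simps)
  have X: "Q * (Az - M) = (Q * Az - (p1 * A1 + (P - p1) * A2)) + (p1 - t * P) * (A1 - A2) + (P - Q) * M"
    unfolding M_def by (simp add: algebra_simps)
  have lt: "\<bar>(lam - t) * P\<bar> \<le> \<eta> * P" using l P(1) by (simp add: abs_mult mult_right_mono)
  have "p1 - t * P = (p1 - lam * P) + (lam - t) * P" by (simp add: algebra_simps)
  then have "\<bar>p1 - t * P\<bar> \<le> \<bar>p1 - lam * P\<bar> + \<bar>(lam - t) * P\<bar>" by (metis abs_triangle_ineq)
  then have pt: "\<bar>p1 - t * P\<bar> \<le> \<epsilon> * P + \<eta> * P" using r lt by linarith
  have AA: "\<bar>A1 - A2\<bar> \<le> 2 * B" using A by linarith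
  have b1: "\<bar>(p1 - t * P) * (A1 - A2)\<bar> \<le> (\<epsilon> * P + \<eta> * P) * (2 * B)"
    unfolding abs_mult by (rule mult_mono[OF pt AA]) (use pos P(1) in auto)
  have b1': "(\<epsilon> * P + \<eta> * P) * (2 * B) = 2 * (P * (\<epsilon> * B)) + 2 * (P * (\<eta> * B))"
    by (simp add: algebra_simps)
  have QPB: "(Q - P) * B \<le> P * (\<epsilon> * B)"
  proof -
    have "(Q - P) * B \<le> (\<epsilon> * P) * B" using P(3) B0 by (rule mult_right_mono)
    then show ?thesis by (simp add: algebra_simps)
  qed
  have b2: "\<bar>(P - Q) * M\<bar> \<le> (Q - P) * B"
  proof -
    have "\<bar>(P - Q) * M\<bar> = (Q - P) * \<bar>M\<bar>" using P(2) by (simp add: abs_mult)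
    also have "\<dots> \<le> (Q - P) * B" using MB P(2) by (intro mult_left_mono) auto
    finally show ?thesis .
  qed
  have pe: "P * (\<epsilon> * B) \<le> P * (e / 32)" using eB P(1) by (intro mult_left_mono) auto
  have ph: "P * (\<eta> * B) \<le> P * (e / 16)" using hB P(1) by (intro mult_left_mono) auto
  have "\<bar>Q * (Az - M)\<bar> \<le> \<bar>Q * Az - (p1 * A1 + (P - p1) * A2)\<bar> + \<bar>(p1 - t * P) * (A1 - A2)\<bar> + \<bar>(P - Q) * M\<bar>"
    unfolding X by (rule abs3)
  also have "\<dots> \<le> P * (e / 2)"
    using E b1 b1' b2 QPB pe ph K d1 by (simp add: algebra_simps)
  finally have Q1: "Q * \<bar>Az - M\<bar> \<le> P * (e / 2)" using P by (simp add: abs_mult)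
  have "P * (e / 2) \<le> Q * (e / 2)" using P e by (intro mult_right_mono) auto
  with Q1 have "Q * \<bar>Az - M\<bar> \<le> Q * (e / 2)" by linarith
  then have "\<bar>Az - M\<bar> \<le> e / 2" using P by (simp add: mult_le_cancel_left_pos)
  then show ?thesis unfolding M_def using e by linarith
qed

lemma finite_bound:
  assumes "finite F" "\<And>f. f\<in>F \<Longrightarrow> BC f"
  shows "\<exists>B>0. \<forall>f\<in>F. \<forall>x. \<bar>f x\<bar> \<le> B"
  using assms
proof (induction F rule: finite_induct)
  case empty
  then show ?case by (intro exI[of _ 1]) simp
next
  case (insert f F)
  obtain B where B: "B > 0" "\<forall>g\<in>F. \<forall>x. \<bar>g x\<bar> \<le> B" using insert.IH insert.prems by blast
  have "bounded (range f)" using insert.prems[of f] by (simp add: BC_def)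
  then obtain a where a: "\<forall>y\<in>range f. norm y \<le> a" unfolding bounded_iff by blast
  have "\<forall>g\<in>insert f F. \<forall>x. \<bar>g x\<bar> \<le> max B a"
  proof (intro ballI allI)
    fix g x assume "g \<in> insert f F"
    then show "\<bar>g x\<bar> \<le> max B a"
    proof
      assume "g = f"
      have "norm (f x) \<le> a" using a by blast
      then show ?thesis using \<open>g = f\<close> by simp
    next
      assume "g \<in> F"
      then have "\<bar>g x\<bar> \<le> B" using B by blast
      then show ?thesis by simp
    qed
  qed
  then show ?case using B(1) by (intro exI[of _ "max B a"]) auto
qed

lemma finite_delta:
  assumes "finite A" "\<And>a. a \<in> A \<Longrightarrow> \<exists>\<delta>>0. Q a \<delta>"
    "\<And>a \<delta> \<delta>'. Q a \<delta> \<Longrightarrow> 0 < \<delta>' \<Longrightarrow> \<delta>' \<le> \<delta> \<Longrightarrow> Q a \<delta>'"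
  shows "\<exists>\<delta>>0. \<forall>a\<in>A. Q a (\<delta>::real)"
  using assms(1,2)
proof (induction A rule: finite_induct)
  case empty
  then show ?case by (intro exI[of _ 1]) simp
next
  case (insert b A)
  obtain d1 where d1: "d1 > 0" "\<forall>a\<in>A. Q a d1" using insert.IH insert.prems by blast
  obtain d2 where d2: "d2 > 0" "Q b d2" using insert.prems by blast
  have "\<forall>a\<in>insert b A. Q a (min d1 d2)"
    using d1 d2 assms(3) by (auto simp: min_def)
  then show ?case using d1 d2 by (intro exI[of _ "min d1 d2"]) auto
qed

lemma avoid_finite:
  fixes R :: "real set"
  assumes "finite R" "0 \<le> t" "t \<le> 1" "\<eta> > 0"
  shows "\<exists>lam. 0 \<le> lam \<and> lam \<le> 1 \<and> \<bar>lam - t\<bar> \<le> \<eta> \<and> lam \<notin> R"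
proof -
  define h where "h = min \<eta> (1/2)"
  have h: "h > 0" "h \<le> \<eta>" "h \<le> 1/2" using assms(4) unfolding h_def by auto
  define J where "J = (if t \<le> 1/2 then {t..t+h} else {t-h..t})"
  have "infinite J" unfolding J_def using h by auto
  then have "infinite (J - R)" using assms(1) by (rule Diff_infinite_finite[rotated])
  then obtain lam where "lam \<in> J - R" by (metis ex_in_conv finite.emptyI)
  then show ?thesis using h assms(2,3) unfolding J_def by (intro exI[of _ lam]) (auto split: if_splits)
qed



lemma link_approx:
  fixes T :: "'a::metric_space \<Rightarrow> 'a"
  assumes lk: "linkable T K" and y1: "y1 \<in> K" and y2: "y2 \<in> K" and t: "0 \<le> t" "t \<le> 1"
    and F: "finite F" "\<And>f. f\<in>F \<Longrightarrow> BC f" and e: "e > 0"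
  shows "\<exists>z\<in>K. \<forall>f\<in>F. \<bar>avg T z f - (t * avg T y1 f + (1 - t) * avg T y2 f)\<bar> < e"
proof -
  have KP: "K \<subseteq> Per T" using lk unfolding linkable_def by (rule conjunct1)
  have L: "\<forall>y1\<in>K. \<forall>y2\<in>K. \<forall>\<epsilon>>0. \<forall>lam\<in>{0..1::real}.
      \<exists>p1 p2 q1 q2 :: nat. \<exists>z\<in>K.
        p1 \<ge> 1 \<and> p2 \<ge> 1 \<and> q1 \<ge> 1 \<and> q2 \<ge> 1 \<and>
        (T ^^ q2) z = z \<and>
        lam - \<epsilon> \<le> real p1 / (real p1 + real p2) \<and> real p1 / (real p1 + real p2) \<le> lam + \<epsilon> \<and>
        p1 \<le> q1 \<and> real q1 \<le> (1 + \<epsilon>) * real p1 \<and> z \<in> bowen_ball T y1 p1 \<epsilon> \<and>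
        real p2 \<le> real q2 - real q1 \<and> real q2 - real q1 \<le> (1 + \<epsilon>) * real p2 \<and>
        (T ^^ q1) z \<in> bowen_ball T y2 p2 \<epsilon>"
    using lk unfolding linkable_def by (rule conjunct2)
  obtain B where B: "B > 0" "\<forall>f\<in>F. \<forall>x. \<bar>f x\<bar> \<le> B" using finite_bound[OF F] by blast
  define k1 where "k1 = min_period T y1"
  define k2 where "k2 = min_period T y2"
  have y1P: "y1 \<in> Per T" and y2P: "y2 \<in> Per T" using y1 y2 KP by auto
  have P1: "(T ^^ k1) y1 = y1" "k1 > 0" using min_period_props[OF y1P] unfolding k1_def by auto
  have P2: "(T ^^ k2) y2 = y2" "k2 > 0" using min_period_props[OF y2P] unfolding k2_def by auto
  define Orb where "Orb = (\<lambda>j. (T ^^ j) y1) ` {..<k1} \<union> (\<lambda>j. (T ^^ j) y2) ` {..<k2}"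
  have finO: "finite Orb" unfolding Orb_def by simp
  define d1 where "d1 = e / 8"
  have d1: "d1 > 0" using e unfolding d1_def by simp
  have "\<exists>\<delta>>0. \<forall>a\<in>F \<times> Orb. (\<lambda>a \<delta>. \<forall>u. dist u (snd a) < \<delta> \<longrightarrow> \<bar>fst a u - fst a (snd a)\<bar> < d1) a \<delta>"
  proof (rule finite_delta)
    show "finite (F \<times> Orb)" using F(1) finO by simp
  next
    fix a assume "a \<in> F \<times> Orb"
    then have "continuous_on UNIV (fst a)" using F(2) by (auto simp: BC_def)
    then have "\<forall>x\<in>UNIV. \<forall>\<epsilon>>0. \<exists>\<delta>>0. \<forall>x'\<in>UNIV. dist x' x < \<delta> \<longrightarrow> dist (fst a x') (fst a x) < \<epsilon>"
      unfolding continuous_on_iff .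
    then obtain \<delta> where "\<delta> > 0" "\<forall>x'\<in>UNIV. dist x' (snd a) < \<delta> \<longrightarrow> dist (fst a x') (fst a (snd a)) < d1"
      using d1 by blast
    then show "\<exists>\<delta>>0. (\<lambda>a \<delta>. \<forall>u. dist u (snd a) < \<delta> \<longrightarrow> \<bar>fst a u - fst a (snd a)\<bar> < d1) a \<delta>"
      by (auto simp: dist_real_def)
  next
    fix a \<delta> \<delta>' assume "(\<lambda>a \<delta>. \<forall>u. dist u (snd a) < \<delta> \<longrightarrow> \<bar>fst a u - fst a (snd a)\<bar> < d1) a \<delta>" "0 < \<delta>'" "\<delta>' \<le> (\<delta>::real)"
    then show "(\<lambda>a \<delta>. \<forall>u. dist u (snd a) < \<delta> \<longrightarrow> \<bar>fst a u - fst a (snd a)\<bar> < d1) a \<delta>'"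
      by auto
  qed
  then obtain \<delta> where \<delta>: "\<delta> > 0" "\<forall>a\<in>F \<times> Orb. \<forall>u. dist u (snd a) < \<delta> \<longrightarrow> \<bar>fst a u - fst a (snd a)\<bar> < d1"
    by auto
  obtain N :: nat where N: "16 * (real k1 + real k2) * B / e \<le> real N" using real_arch_simple by blast
  define R where "R = (\<lambda>(a,b). real a / (real a + real b)) ` ({..<N} \<times> {..<N})"
  have finR: "finite R" unfolding R_def by simp
  define \<eta> where "\<eta> = e / (16 * B)"
  have \<eta>: "\<eta> > 0" "\<eta> * B = e / 16" using e B(1) unfolding \<eta>_def by auto
  obtain lam where lam: "0 \<le> lam" "lam \<le> 1" "\<bar>lam - t\<bar> \<le> \<eta>" "lam \<notin> R"
    using avoid_finite[OF finR t \<eta>(1)] by blast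
  define D where "D = insert 1 ((\<lambda>r. \<bar>r - lam\<bar>) ` R)"
  have finD: "finite D" "D \<noteq> {}" unfolding D_def using finR by auto
  define d0 where "d0 = Min D"
  have "\<forall>a\<in>D. 0 < a" unfolding D_def using lam(4) by auto
  then have d0: "d0 > 0" unfolding d0_def using finD by simp
  have d0R: "d0 \<le> \<bar>r - lam\<bar>" if "r \<in> R" for r
    unfolding d0_def using finD that by (intro Min_le) (auto simp: D_def)
  define \<epsilon> where "\<epsilon> = min \<delta> (min (d0/2) (e / (32 * B)))"
  have \<epsilon>: "\<epsilon> > 0" "\<epsilon> \<le> \<delta>" "\<epsilon> \<le> d0/2" "\<epsilon> \<le> e / (32 * B)"
    using \<delta>(1) d0 e B(1) unfolding \<epsilon>_def by auto
  have \<epsilon>B: "\<epsilon> * B \<le> e / 32"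
  proof -
    have "\<epsilon> * B \<le> e / (32 * B) * B" using \<epsilon>(4) B(1) by (intro mult_right_mono) auto
    then show ?thesis using B(1) by simp
  qed
  have "lam \<in> {0..1}" using lam by simp
  from L[rule_format, OF y1 y2 \<epsilon>(1) this]
  obtain p1 p2 q1 q2 z where z: "z \<in> K" and H:
        "p1 \<ge> 1 \<and> p2 \<ge> 1 \<and> q1 \<ge> 1 \<and> q2 \<ge> 1 \<and>
        (T ^^ q2) z = z \<and>
        lam - \<epsilon> \<le> real p1 / (real p1 + real p2) \<and> real p1 / (real p1 + real p2) \<le> lam + \<epsilon> \<and>
        p1 \<le> q1 \<and> real q1 \<le> (1 + \<epsilon>) * real p1 \<and> z \<in> bowen_ball T y1 p1 \<epsilon> \<and>
        real p2 \<le> real q2 - real q1 \<and> real q2 - real q1 \<le> (1 + \<epsilon>) * real p2 \<and>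
        (T ^^ q1) z \<in> bowen_ball T y2 p2 \<epsilon>"
    by blast
  have h1: "p1 \<ge> 1" "p2 \<ge> 1" "q2 \<ge> 1" "(T ^^ q2) z = z" using H by auto
  have h2: "lam - \<epsilon> \<le> real p1 / (real p1 + real p2)" "real p1 / (real p1 + real p2) \<le> lam + \<epsilon>"
    using H by auto
  have h3: "p1 \<le> q1" "real q1 \<le> (1 + \<epsilon>) * real p1" "z \<in> bowen_ball T y1 p1 \<epsilon>" using H by auto
  have h4: "real p2 \<le> real q2 - real q1" "real q2 - real q1 \<le> (1 + \<epsilon>) * real p2"
    "(T ^^ q1) z \<in> bowen_ball T y2 p2 \<epsilon>" using H by auto
  have q12: "q1 + p2 \<le> q2" using h4(1) by linarith
  define P where "P = real p1 + real p2"
  have Ppos: "P > 0" using h1 unfolding P_def by simp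
  have PQ: "P \<le> real q2" using h3(1) q12 unfolding P_def by linarith
  have QP: "real q2 - P \<le> \<epsilon> * P"
  proof -
    have "real q1 \<le> real p1 + \<epsilon> * real p1" using h3(2) by (simp add: algebra_simps)
    moreover have "real q2 - real q1 \<le> real p2 + \<epsilon> * real p2" using h4(2) by (simp add: algebra_simps)
    moreover have "\<epsilon> * P = \<epsilon> * real p1 + \<epsilon> * real p2" unfolding P_def by (simp add: algebra_simps)
    ultimately show ?thesis unfolding P_def by linarith
  qed
  have rat: "\<bar>real p1 - lam * P\<bar> \<le> \<epsilon> * P"
  proof -
    have "(lam - \<epsilon>) * P \<le> real p1" using h2(1) Ppos unfolding P_def by (simp add: pos_le_divide_eq)
    moreover have "real p1 \<le> (lam + \<epsilon>) * P" using h2(2) Ppos unfolding P_def by (simp add: pos_divide_le_eq)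
    ultimately show ?thesis by (simp add: algebra_simps abs_le_iff)
  qed
  have PN: "real N \<le> P"
  proof (rule ccontr)
    assume "\<not> real N \<le> P"
    then have "p1 + p2 < N" unfolding P_def by linarith
    then have "(p1, p2) \<in> {..<N} \<times> {..<N}" by auto
    then have "real p1 / (real p1 + real p2) \<in> R" unfolding R_def by force
    then have "d0 \<le> \<bar>real p1 / (real p1 + real p2) - lam\<bar>" by (rule d0R)
    moreover have "\<bar>real p1 / (real p1 + real p2) - lam\<bar> \<le> \<epsilon>" using h2 by (simp add: abs_le_iff)
    ultimately show False using \<epsilon>(3) d0 by linarith
  qed
  have Kb: "2 * (real k1 + real k2) * B \<le> P * (e / 8)"
  proof -
    have "16 * (real k1 + real k2) * B \<le> real N * e" using N e by (simp add: divide_le_eq)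
    moreover have "real N * e \<le> P * e" using PN e by (intro mult_right_mono) auto
    ultimately have X: "16 * (real k1 + real k2) * B \<le> P * e" by linarith
    have eq: "2 * (real k1 + real k2) * B = (16 * (real k1 + real k2) * B) / 8" by simp
    have eq2: "P * (e/8) = (P*e)/8" by simp
    show ?thesis unfolding eq eq2 using X by (rule divide_right_mono) simp
  qed
  have zP: "z \<in> Per T" using z KP by auto
  have main: "\<bar>avg T z f - (t * avg T y1 f + (1 - t) * avg T y2 f)\<bar> < e" if f: "f \<in> F" for f
  proof -
    have fB: "\<And>x. \<bar>f x\<bar> \<le> B" using B(2) f by blast
    have c1: "\<forall>w\<in>(\<lambda>j. (T ^^ j) y1) ` {..<k1}. \<forall>u. dist u w < \<delta> \<longrightarrow> \<bar>f u - f w\<bar> < d1"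
    proof (intro ballI allI impI)
      fix w u assume "w \<in> (\<lambda>j. (T ^^ j) y1) ` {..<k1}" "dist u w < \<delta>"
      then have "(f, w) \<in> F \<times> Orb" using f unfolding Orb_def by auto
      then show "\<bar>f u - f w\<bar> < d1" using \<delta>(2) \<open>dist u w < \<delta>\<close> by fastforce
    qed
    have c2: "\<forall>w\<in>(\<lambda>j. (T ^^ j) y2) ` {..<k2}. \<forall>u. dist u w < \<delta> \<longrightarrow> \<bar>f u - f w\<bar> < d1"
    proof (intro ballI allI impI)
      fix w u assume "w \<in> (\<lambda>j. (T ^^ j) y2) ` {..<k2}" "dist u w < \<delta>"
      then have "(f, w) \<in> F \<times> Orb" using f unfolding Orb_def by auto
      then show "\<bar>f u - f w\<bar> < d1" using \<delta>(2) \<open>dist u w < \<delta>\<close> by fastforce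
    qed
    have b1: "\<forall>j<p1. dist ((T ^^ j) z) ((T ^^ j) y1) < \<delta>"
      using h3(3) \<epsilon>(2) unfolding bowen_ball_def by fastforce
    have b2: "\<forall>j<p2. dist ((T ^^ j) ((T ^^ q1) z)) ((T ^^ j) y2) < \<delta>"
      using h4(3) \<epsilon>(2) unfolding bowen_ball_def by fastforce
    note core = core_est[OF P1 P2 fB c1 c2 h3(1) q12 b1 b2]
    have Sz: "real q2 * avg T z f = (\<Sum>j<q2. f ((T ^^ j) z))"
      using avg_period[OF zP h1(4), of f] h1(3) by simp
    have A1: "avg T y1 f = (\<Sum>j<k1. f ((T ^^ j) y1)) / real k1" unfolding avg_def k1_def ..
    have A2: "avg T y2 f = (\<Sum>j<k2. f ((T ^^ j) y2)) / real k2" unfolding avg_def k2_def ..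
    have A1B: "\<bar>avg T y1 f\<bar> \<le> B"
    proof -
      have "\<bar>\<Sum>j<k1. f ((T ^^ j) y1)\<bar> \<le> real k1 * B" by (rule sum_abs_bound) (rule fB)
      then show ?thesis unfolding A1 using P1(2) by (simp add: abs_divide divide_le_eq mult.commute)
    qed
    have A2B: "\<bar>avg T y2 f\<bar> \<le> B"
    proof -
      have "\<bar>\<Sum>j<k2. f ((T ^^ j) y2)\<bar> \<le> real k2 * B" by (rule sum_abs_bound) (rule fB)
      then show ?thesis unfolding A2 using P2(2) by (simp add: abs_divide divide_le_eq mult.commute)
    qed
    have E: "\<bar>real q2 * avg T z f - (real p1 * avg T y1 f + (P - real p1) * avg T y2 f)\<bar>
        \<le> P * d1 + 2 * (real k1 + real k2) * B + (real q2 - P) * B"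
      using core unfolding Sz A1 A2 P_def by simp
    show ?thesis
      by (rule final_arith[OF Ppos PQ QP E A1B A2B t rat lam(3) Kb d1_def \<epsilon>B])
         (use \<eta>(1,2) e B(1) \<epsilon>(1) in auto)
  qed
  show ?thesis using z main by blast
qed



lemma mixarith:
  fixes t a1 m1 a2 m2 az e :: real
  assumes "0 \<le> t" "t \<le> 1" "\<bar>a1 - m1\<bar> < e/4" "\<bar>a2 - m2\<bar> < e/4"
    "\<bar>az - (t * a1 + (1 - t) * a2)\<bar> < e/2"
  shows "\<bar>az - (t * m1 + (1 - t) * m2)\<bar> < e"
proof -
  have 1: "\<bar>t * (a1 - m1)\<bar> \<le> t * (e/4)" unfolding abs_mult using assms(1,3)
    by (intro mult_mono) auto
  have 2: "\<bar>(1 - t) * (a2 - m2)\<bar> \<le> (1 - t) * (e/4)" unfolding abs_mult using assms(2,4)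
    by (intro mult_mono) auto
  have X: "az - (t * m1 + (1 - t) * m2) = (az - (t * a1 + (1 - t) * a2)) + t * (a1 - m1) + (1 - t) * (a2 - m2)"
    by (simp add: algebra_simps)
  have "\<bar>az - (t * m1 + (1 - t) * m2)\<bar> \<le> \<bar>az - (t * a1 + (1 - t) * a2)\<bar> + \<bar>t * (a1 - m1)\<bar> + \<bar>(1 - t) * (a2 - m2)\<bar>"
    unfolding X by (rule abs3)
  moreover have "t * (e/4) + (1 - t) * (e/4) = e/4" by (simp add: field_simps)
  moreover have "e > 0" using assms(3) by linarith
  ultimately show ?thesis using 1 2 assms(5) by linarith
qed

lemma BC_bound: "BC f \<Longrightarrow> \<exists>B. \<forall>x. \<bar>f x\<bar> \<le> B"
  unfolding BC_def bounded_iff by (metis rangeI real_norm_def)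

theorem theorem5p13:
  fixes T :: "'a::polish_space \<Rightarrow> 'a" and K :: "'a set"
  assumes "dyn_system T" and "linkable T K"
  shows "weak_star closure_of (Mco T K) = closed_convex_hull (Mco T K)"
proof -
  have KP: "K \<subseteq> Per T" using assms(2) unfolding linkable_def by (rule conjunct1)
  have MP: "Mco T K \<subseteq> prob_measures" unfolding Mco_def using KP gamma_prob by blast
  define C where "C = weak_star closure_of (Mco T K)"
  have CP: "C \<subseteq> prob_measures" unfolding C_def by (rule closure_sub_P)
  have conv: "convex_measures C"
    unfolding convex_measures_def
  proof (intro ballI)
    fix \<mu> \<nu> t assume \<mu>: "\<mu> \<in> C" and \<nu>: "\<nu> \<in> C" and t: "t \<in> {0..1::real}"
    have \<mu>P: "\<mu> \<in> prob_measures" and \<nu>P: "\<nu> \<in> prob_measures" using \<mu> \<nu> CP by auto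
    show "mix t \<mu> \<nu> \<in> C"
      unfolding C_def
    proof (rule closure_approxI)
      show "mix t \<mu> \<nu> \<in> prob_measures" by (rule mix_prob[OF \<mu>P \<nu>P t])
    next
      fix F :: "('a \<Rightarrow> real) set" and e assume F: "finite F" "\<forall>f\<in>F. BC f" and e: "(e::real) > 0"
      have F2: "\<And>f. f \<in> F \<Longrightarrow> BC f" using F(2) by blast
      obtain s1 where s1: "s1 \<in> Mco T K" "\<forall>f\<in>F. \<bar>(\<integral>x. f x \<partial>s1) - (\<integral>x. f x \<partial>\<mu>)\<bar> < e/4"
        using closure_approx[OF \<mu>[unfolded C_def] F(1) F2] e by (metis divide_pos_pos zero_less_numeral)
      obtain s2 where s2: "s2 \<in> Mco T K" "\<forall>f\<in>F. \<bar>(\<integral>x. f x \<partial>s2) - (\<integral>x. f x \<partial>\<nu>)\<bar> < e/4"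
        using closure_approx[OF \<nu>[unfolded C_def] F(1) F2] e by (metis divide_pos_pos zero_less_numeral)
      obtain y1 where y1: "y1 \<in> K" "s1 = gamma T y1" using s1(1) unfolding Mco_def by blast
      obtain y2 where y2: "y2 \<in> K" "s2 = gamma T y2" using s2(1) unfolding Mco_def by blast
      have t01: "0 \<le> t" "t \<le> 1" using t by auto
      have e2: "e/2 > 0" using e by simp
      obtain z where z: "z \<in> K" "\<forall>f\<in>F. \<bar>avg T z f - (t * avg T y1 f + (1 - t) * avg T y2 f)\<bar> < e/2"
        using link_approx[OF assms(2) y1(1) y2(1) t01 F(1) F2 e2] by blast
      have "gamma T z \<in> nbhd (mix t \<mu> \<nu>) F e"
        unfolding nbhd_def
      proof (intro CollectI conjI ballI)
        show "gamma T z \<in> prob_measures" using gamma_prob z(1) KP by blast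
      next
        fix f assume f: "f \<in> F"
        have meas: "f \<in> borel_measurable borel" using F2[OF f] unfolding BC_def
          by (intro borel_measurable_continuous_onI) simp
        obtain Bf where Bf: "\<And>x. \<bar>f x\<bar> \<le> Bf" using BC_bound[OF F2[OF f]] by blast
        have g: "(\<integral>x. f x \<partial>gamma T y) = avg T y f" if "y \<in> K" for y
          using gamma_integral[OF _ meas Bf] that KP by blast
        have mi: "(\<integral>x. f x \<partial>mix t \<mu> \<nu>) = t * (\<integral>x. f x \<partial>\<mu>) + (1 - t) * (\<integral>x. f x \<partial>\<nu>)"
          by (rule mix_integral[OF \<mu>P \<nu>P t meas Bf])
        show "\<bar>(\<integral>x. f x \<partial>gamma T z) - (\<integral>x. f x \<partial>mix t \<mu> \<nu>)\<bar> < e"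
          unfolding mi g[OF z(1)]
          by (rule mixarith[OF t01])
             (use s1(2) s2(2) z(2) f g[OF y1(1)] g[OF y2(1)] y1(2) y2(2) in auto)
      qed
      moreover have "gamma T z \<in> Mco T K" using z(1) unfolding Mco_def by blast
      ultimately show "\<exists>s\<in>Mco T K. s \<in> nbhd (mix t \<mu> \<nu>) F e" by blast
    qed
  qed
  have sub: "Mco T K \<subseteq> C" unfolding C_def by (rule closure_of_subset) (unfold topspace_ws, rule MP)
  have cl: "closedin weak_star C" unfolding C_def by simp
  have "closed_convex_hull (Mco T K) \<subseteq> C"
    unfolding closed_convex_hull_def by (rule Inter_lower) (use CP sub cl conv in blast)
  moreover have "C \<subseteq> closed_convex_hull (Mco T K)"
    unfolding closed_convex_hull_def C_def
  proof (rule Inter_greatest)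
    fix X assume "X \<in> {C. C \<subseteq> prob_measures \<and> Mco T K \<subseteq> C \<and> closedin weak_star C \<and> convex_measures C}"
    then have "Mco T K \<subseteq> X" "closedin weak_star X" by auto
    then show "weak_star closure_of Mco T K \<subseteq> X" by (rule closure_of_minimal)
  qed
  ultimately show ?thesis unfolding C_def by blast
qed


end
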